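(* Let $\Gamma$ be a finite graph with right angled Artin group $R(\Gamma)$. If $m(R(\Gamma))\le 3$, then $\Gamma$ contains no induced subgraph isomorphic to a 4-cycle (square).
   Context: For a finite simple graph $\Gamma$, $R(\Gamma)$ is the group with one generator per vertex and relations that generators of adjacent vertices commute. $m(G)$ is the minimal $d$ such that $G$ embeds in $GL(d,\mathbb{F})$ for some field $\mathbb{F}$ ($\infty$ if none). *)

theory Defs
  imports "HOL-Algebra.Group" "Jordan_Normal_Form.Matrix"
begin

definition simple_graph :: "'a set \<Rightarrow> ('a \<Rightarrow> 'a \<Rightarrow> bool) \<Rightarrow> bool" where
  "simple_graph V E \<longleftrightarrow> finite V \<and> (\<forall>u\<in>V. \<forall>v\<in>V. E u v \<longrightarrow> E v u) \<and> (\<forall>v\<in>V. \<not> E v v)"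

text \<open>Words in the generators and their inverses: a letter (v, True) is the
  generator v, a letter (v, False) is its inverse.\<close>

type_synonym 'a word = "('a \<times> bool) list"

definition words :: "'a set \<Rightarrow> 'a word set" where
  "words V = lists (V \<times> UNIV)"

inductive_set raag_eq :: "'a set \<Rightarrow> ('a \<Rightarrow> 'a \<Rightarrow> bool) \<Rightarrow> ('a word \<times> 'a word) set"
  for V E where
  refl: "w \<in> words V \<Longrightarrow> (w, w) \<in> raag_eq V E"
| sym: "(w, w') \<in> raag_eq V E \<Longrightarrow> (w', w) \<in> raag_eq V E"
| trans: "(w, w') \<in> raag_eq V E \<Longrightarrow> (w', w'') \<in> raag_eq V E \<Longrightarrow> (w, w'') \<in> raag_eq V E"
| cancel: "xs \<in> words V \<Longrightarrow> ys \<in> words V \<Longrightarrow> v \<in> V \<Longrightarrow>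
    (xs @ [(v, b), (v, \<not> b)] @ ys, xs @ ys) \<in> raag_eq V E"
| commute: "xs \<in> words V \<Longrightarrow> ys \<in> words V \<Longrightarrow> u \<in> V \<Longrightarrow> v \<in> V \<Longrightarrow> E u v \<Longrightarrow>
    (xs @ [(u, b), (v, c)] @ ys, xs @ [(v, c), (u, b)] @ ys) \<in> raag_eq V E"

definition RAAG :: "'a set \<Rightarrow> ('a \<Rightarrow> 'a \<Rightarrow> bool) \<Rightarrow> 'a word set monoid" where
  "RAAG V E = \<lparr> carrier = words V // raag_eq V E,
      mult = (\<lambda>X Y. raag_eq V E `` {(SOME x. x \<in> X) @ (SOME y. y \<in> Y)}),
      one = raag_eq V E `` {[]} \<rparr>"

definition GL :: "nat \<Rightarrow> 'f::field itself \<Rightarrow> 'f mat monoid" where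
  "GL d ty = units_of (ring_mat ty d ())"

definition has_induced_square :: "'a set \<Rightarrow> ('a \<Rightarrow> 'a \<Rightarrow> bool) \<Rightarrow> bool" where
  "has_induced_square V E \<longleftrightarrow> (\<exists>a\<in>V. \<exists>b\<in>V. \<exists>c\<in>V. \<exists>d\<in>V.
      distinct [a, b, c, d] \<and> E a b \<and> E b c \<and> E c d \<and> E d a \<and> \<not> E a c \<and> \<not> E b d)"

end

theory Submission
  imports Defs "HOL-Algebra.Algebraic_Closure_Type"
begin

datatype 'a m3 = M3 'a 'a 'a 'a 'a 'a 'a 'a 'a
datatype 'a v3 = V3 'a 'a 'a

instantiation m3 :: (comm_ring_1) ring_1
begin
definition "0 = M3 0 0 0 0 0 0 0 0 0"
definition "1 = M3 1 0 0 0 1 0 0 0 1"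
fun plus_m3 where "plus_m3 (M3 a b c d e f g h i) (M3 a' b' c' d' e' f' g' h' i') =
  M3 (a+a') (b+b') (c+c') (d+d') (e+e') (f+f') (g+g') (h+h') (i+i')"
fun minus_m3 where "minus_m3 (M3 a b c d e f g h i) (M3 a' b' c' d' e' f' g' h' i') =
  M3 (a-a') (b-b') (c-c') (d-d') (e-e') (f-f') (g-g') (h-h') (i-i')"
fun uminus_m3 where "uminus_m3 (M3 a b c d e f g h i) = M3 (-a) (-b) (-c) (-d) (-e) (-f) (-g) (-h) (-i)"
fun times_m3 where "times_m3 (M3 a b c d e f g h i) (M3 a' b' c' d' e' f' g' h' i') =
  M3 (a*a'+b*d'+c*g') (a*b'+b*e'+c*h') (a*c'+b*f'+c*i')
     (d*a'+e*d'+f*g') (d*b'+e*e'+f*h') (d*c'+e*f'+f*i')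
     (g*a'+h*d'+i*g') (g*b'+h*e'+i*h') (g*c'+h*f'+i*i')"
instance proof
  fix x y z :: "'a m3"
  show "x * y * z = x * (y * z)" by (cases x; cases y; cases z) (simp add: algebra_simps)
  show "x + y + z = x + (y + z)" by (cases x; cases y; cases z) (simp add: algebra_simps)
  show "x + y = y + x" by (cases x; cases y) (simp add: algebra_simps)
  show "0 + x = x" by (cases x) (simp add: zero_m3_def)
  show "- x + x = 0" by (cases x) (simp add: zero_m3_def)
  show "x - y = x + - y" by (cases x; cases y) (simp add: algebra_simps)
  show "1 * x = x" by (cases x) (simp add: one_m3_def)
  show "x * 1 = x" by (cases x) (simp add: one_m3_def)
  show "(x + y) * z = x * z + y * z" by (cases x; cases y; cases z) (simp add: algebra_simps)
  show "x * (y + z) = x * y + x * z" by (cases x; cases y; cases z) (simp add: algebra_simps)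
  show "(0::'a m3) \<noteq> 1" by (simp add: zero_m3_def one_m3_def)
qed
end

fun upper :: "'a::comm_ring_1 m3 \<Rightarrow> bool" where
  "upper (M3 a b c d e f g h i) = (d = 0 \<and> g = 0 \<and> h = 0)"
fun unitri :: "'a::comm_ring_1 m3 \<Rightarrow> bool" where
  "unitri (M3 a b c d e f g h i) = (d = 0 \<and> g = 0 \<and> h = 0 \<and> a = 1 \<and> e = 1 \<and> i = 1)"

lemma m3_eq_iff: "M3 a b c d e f g h i = M3 a' b' c' d' e' f' g' h' i' \<longleftrightarrow>
  a = a' \<and> b = b' \<and> c = c' \<and> d = d' \<and> e = e' \<and> f = f' \<and> g = g' \<and> h = h' \<and> i = i'"
  by simp

lemma upper_inv: fixes A :: "'a::field m3"
  assumes "upper A" "A * B = 1" shows "upper B"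
proof (cases A; cases B)
  fix a b c d e f g h i a' b' c' d' e' f' g' h' i'
  assume A: "A = M3 a b c d e f g h i" and B: "B = M3 a' b' c' d' e' f' g' h' i'"
  from assms A B have z: "d = 0" "g = 0" "h = 0" by auto
  from assms(2) A B z have eqs: "i*g' = 0" "i*h' = 0" "i*i' = 1" "e*d' + f*g' = 0" "e*e'+f*h' = 1"
    by (auto simp: one_m3_def)
  from eqs have "i \<noteq> 0" by auto
  with eqs have "g' = 0" "h' = 0" by auto
  with eqs have "e * d' = 0" "e * e' = 1" by auto
  then have "e \<noteq> 0" by auto
  with \<open>e * d' = 0\<close> have "d' = 0" by auto
  with \<open>g' = 0\<close> \<open>h' = 0\<close> show ?thesis using B by simp
qed

lemma comm_unitri: fixes g :: "'a::field m3"
  assumes "upper g" "upper h" "g * g' = 1" "h * h' = 1"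
  shows "unitri (g * h * g' * h')"
proof -
  have u: "upper g'" "upper h'" using assms upper_inv by blast+
  show ?thesis
  proof (cases g; cases h; cases g'; cases h')
    fix a b c d e f gg hh i a' b' c' d' e' f' g'' h'' i'
        a2 b2 c2 d2 e2 f2 g2 h2 i2 a3 b3 c3 d3 e3 f3 g3 h3 i3
    assume G: "g = M3 a b c d e f gg hh i" and H: "h = M3 a' b' c' d' e' f' g'' h'' i'"
      and G': "g' = M3 a2 b2 c2 d2 e2 f2 g2 h2 i2" and H': "h' = M3 a3 b3 c3 d3 e3 f3 g3 h3 i3"
    from assms u G H G' H' have z: "d = 0" "gg = 0" "hh = 0" "d' = 0" "g''=0" "h''=0"
      "d2 = 0" "g2 = 0" "h2 = 0" "d3 = 0" "g3 = 0" "h3 = 0" by auto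
    from assms(3,4) G H G' H' z have "a*a2 = 1" "e*e2 = 1" "i*i2 = 1" "a'*a3 = 1" "e'*e3 = 1" "i'*i3=1"
      by (auto simp: one_m3_def)
    then show ?thesis using G H G' H' z
      by (simp add: algebra_simps)
  qed
qed

lemma unitri_upper: "unitri A \<Longrightarrow> upper A" by (cases A) auto

lemma unitri_mult: fixes A :: "'a::comm_ring_1 m3"
  shows "unitri A \<Longrightarrow> unitri B \<Longrightarrow> unitri (A*B)"
  by (cases A; cases B) auto

lemma upper_mult: fixes A :: "'a::comm_ring_1 m3"
  shows "upper A \<Longrightarrow> upper B \<Longrightarrow> upper (A*B)"
  by (cases A; cases B) auto

lemma unitri_inv: fixes A :: "'a::field m3"
  assumes "unitri A" "A * B = 1" shows "unitri B \<and> (\<exists>x y z. A = M3 1 x y 0 1 z 0 0 1 \<and> B = M3 1 (-x) (x*z-y) 0 1 (-z) 0 0 1)"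
proof -
  have "upper B" using assms upper_inv unitri_upper by blast
  then show ?thesis using assms
    apply (cases A; cases B)
    apply (auto simp: one_m3_def add_eq_0_iff2)
    apply (metis add_eq_0_iff2 minus_add_cancel minus_mult_right add.commute diff_conv_add_uminus)
    done
qed

definition special :: "'a::comm_ring_1 m3 \<Rightarrow> bool" where
  "special k \<longleftrightarrow> (\<exists>x. k = M3 1 0 x 0 1 0 0 0 1)"

lemma special_comm: fixes k :: "'a::comm_ring_1 m3"
  shows "special k \<Longrightarrow> unitri U \<Longrightarrow> k * U = U * k"
  unfolding special_def by (cases U) auto

lemma comm_special: fixes c1 :: "'a::field m3"
  assumes "unitri c1" "unitri c2" "c1 * c1i = 1" "c2 * c2i = 1"
  shows "special (c1 * c2 * c1i * c2i)"
proof -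
  obtain x y z where 1: "c1 = M3 1 x y 0 1 z 0 0 1" "c1i = M3 1 (-x) (x*z-y) 0 1 (-z) 0 0 1"
    using unitri_inv[OF assms(1,3)] by blast
  obtain x' y' z' where 2: "c2 = M3 1 x' y' 0 1 z' 0 0 1" "c2i = M3 1 (-x') (x'*z'-y') 0 1 (-z') 0 0 1"
    using unitri_inv[OF assms(2,4)] by blast
  show ?thesis unfolding special_def 1 2
    apply (simp add: algebra_simps)
    apply (rule_tac x="x*z' - x'*z" in exI)
    apply simp
    done
qed

definition commu :: "'a::ring_1 \<Rightarrow> 'a \<Rightarrow> 'a \<Rightarrow> 'a \<Rightarrow> 'a" where
  "commu x y x' y' = x * y * x' * y'"

definition lawm :: "'a::ring_1 \<Rightarrow> 'a \<Rightarrow> 'a \<Rightarrow> 'a \<Rightarrow> 'a" where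
  "lawm y1 y1' y2 y2' = commu (commu (commu y1 y2 y1' y2') (commu y1' y2 y1 y2') (commu y2 y1 y2' y1') (commu y2 y1' y2' y1))
     (commu y1 y2' y1' y2)
     (commu (commu y1' y2 y1 y2') (commu y1 y2 y1' y2') (commu y2 y1' y2' y1) (commu y2 y1 y2' y1'))
     (commu y2' y1 y2 y1')"

lemma lawm_upper: fixes y1 :: "'a::field m3"
  assumes u: "upper y1" "upper y2" and i: "y1 * y1' = 1" "y1' * y1 = 1" "y2 * y2' = 1" "y2' * y2 = 1"
  shows "lawm y1 y1' y2 y2' = 1"
proof -
  have u': "upper y1'" "upper y2'" using u i upper_inv by blast+
  define c1 where "c1 = commu y1 y2 y1' y2'"
  define c1i where "c1i = commu y2 y1 y2' y1'"
  define c2 where "c2 = commu y1' y2 y1 y2'"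
  define c2i where "c2i = commu y2 y1' y2' y1"
  define c3 where "c3 = commu y1 y2' y1' y2"
  define c3i where "c3i = commu y2' y1 y2 y1'"
  have inv: "c1 * c1i = 1" "c1i * c1 = 1" "c2 * c2i = 1" "c2i * c2 = 1" "c3 * c3i = 1"
    unfolding c1_def c1i_def c2_def c2i_def c3_def c3i_def commu_def using i
    by (simp_all add: mult.assoc, simp_all add: mult.assoc[symmetric])
  have ut: "unitri c1" "unitri c2" "unitri c3"
    unfolding c1_def c2_def c3_def commu_def using u u' i
    by (auto intro!: comm_unitri[unfolded commu_def])
  have sp: "special (commu c1 c2 c1i c2i)" unfolding commu_def using comm_special ut inv by blast
  have kk: "commu c1 c2 c1i c2i * commu c2 c1 c2i c1i = 1" unfolding commu_def using inv
    by (simp add: mult.assoc) (simp add: mult.assoc[symmetric])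
  have "lawm y1 y1' y2 y2' = commu (commu c1 c2 c1i c2i) c3 (commu c2 c1 c2i c1i) c3i"
    unfolding lawm_def c1_def c1i_def c2_def c2i_def c3_def c3i_def ..
  also have "\<dots> = c3 * (commu c1 c2 c1i c2i * commu c2 c1 c2i c1i) * c3i"
    using special_comm[OF sp ut(3)] unfolding commu_def[of _ c3] by (simp add: mult.assoc)
  also have "\<dots> = 1" using kk inv by simp
  finally show ?thesis .
qed

fun mv :: "'a::comm_ring_1 m3 \<Rightarrow> 'a v3 \<Rightarrow> 'a v3" where
  "mv (M3 a b c d e f g h i) (V3 x y z) = V3 (a*x+b*y+c*z) (d*x+e*y+f*z) (g*x+h*y+i*z)"
fun vm :: "'a::comm_ring_1 v3 \<Rightarrow> 'a m3 \<Rightarrow> 'a v3" where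
  "vm (V3 x y z) (M3 a b c d e f g h i) = V3 (x*a+y*d+z*g) (x*b+y*e+z*h) (x*c+y*f+z*i)"
fun dot :: "'a::comm_ring_1 v3 \<Rightarrow> 'a v3 \<Rightarrow> 'a" where
  "dot (V3 x y z) (V3 x' y' z') = x*x' + y*y' + z*z'"
fun cross :: "'a::comm_ring_1 v3 \<Rightarrow> 'a v3 \<Rightarrow> 'a v3" where
  "cross (V3 x y z) (V3 x' y' z') = V3 (y*z' - z*y') (z*x' - x*z') (x*y' - y*x')"
fun vsc :: "'a::comm_ring_1 \<Rightarrow> 'a v3 \<Rightarrow> 'a v3" where
  "vsc a (V3 x y z) = V3 (a*x) (a*y) (a*z)"
fun vsub :: "'a::comm_ring_1 v3 \<Rightarrow> 'a v3 \<Rightarrow> 'a v3" where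
  "vsub (V3 x y z) (V3 x' y' z') = V3 (x-x') (y-y') (z-z')"
fun outer :: "'a::comm_ring_1 v3 \<Rightarrow> 'a v3 \<Rightarrow> 'a m3" where
  "outer (V3 x y z) (V3 x' y' z') = M3 (x*x') (x*y') (x*z') (y*x') (y*y') (y*z') (z*x') (z*y') (z*z')"
fun mcols :: "'a::comm_ring_1 v3 \<Rightarrow> 'a v3 \<Rightarrow> 'a v3 \<Rightarrow> 'a m3" where
  "mcols (V3 a d g) (V3 b e h) (V3 c f i) = M3 a b c d e f g h i"
fun mrows :: "'a::comm_ring_1 v3 \<Rightarrow> 'a v3 \<Rightarrow> 'a v3 \<Rightarrow> 'a m3" where
  "mrows (V3 a b c) (V3 d e f) (V3 g h i) = M3 a b c d e f g h i"
definition dg :: "'a::comm_ring_1 \<Rightarrow> 'a m3" where "dg a = M3 a 0 0 0 a 0 0 0 a"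
definition msc :: "'a::comm_ring_1 \<Rightarrow> 'a m3 \<Rightarrow> 'a m3" where "msc a M = dg a * M"

definition "e1 = V3 1 0 0"
definition "e2 = V3 0 1 0"
definition "e3 = V3 0 0 1"
definition "v0 = V3 0 0 0"

lemma mv_mult: "mv (A*B) v = mv A (mv B v)"
  by (cases A; cases B; cases v) (simp add: algebra_simps)
lemma vm_mult: "vm z (A*B) = vm (vm z A) B"
  by (cases A; cases B; cases z) (simp add: algebra_simps)
lemma dot_mv: "dot z (mv A v) = dot (vm z A) v"
  by (cases A; cases z; cases v) (simp add: algebra_simps)
lemma mv_one[simp]: "mv 1 v = v" by (cases v) (simp add: one_m3_def)
lemma vm_one[simp]: "vm z 1 = z" by (cases z) (simp add: one_m3_def)
lemma mv_vsc: "mv A (vsc a v) = vsc a (mv A v)" by (cases A; cases v) (simp add: algebra_simps)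
lemma vm_vsc: "vm (vsc a z) A = vsc a (vm z A)" by (cases A; cases z) (simp add: algebra_simps)
lemma dot_vsc1: "dot (vsc a x) y = a * dot x y" by (cases x; cases y) (simp add: algebra_simps)
lemma dot_vsc2: "dot x (vsc a y) = a * dot x y" by (cases x; cases y) (simp add: algebra_simps)
lemma vsc_vsc: "vsc a (vsc b x) = vsc (a*b) x" by (cases x) (simp add: algebra_simps)
lemma vsc_one[simp]: "vsc 1 x = x" by (cases x) simp
lemma dot_comm: "dot x y = dot y x" by (cases x; cases y) (simp add: algebra_simps)
lemma triple: "dot x (cross y z) = dot (cross x y) z"
  by (cases x; cases y; cases z) (simp add: algebra_simps)
lemma bac_cab: "cross x (cross y z) = vsub (vsc (dot x z) y) (vsc (dot x y) z)"
  by (cases x; cases y; cases z) (simp add: algebra_simps)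
lemma cross_self: "dot x (cross x y) = 0" "dot y (cross x y) = 0"
  by (cases x; cases y; simp add: algebra_simps)+
lemma mv_outer: "mv (outer u w) x = vsc (dot w x) u"
  by (cases u; cases w; cases x) (simp add: algebra_simps)
lemma vm_outer: "vm z (outer u w) = vsc (dot z u) w"
  by (cases u; cases w; cases z) (simp add: algebra_simps)
lemma mult_outer: "A * outer u w = outer (mv A u) w"
  by (cases A; cases u; cases w) (simp add: algebra_simps)
lemma outer_mult: "outer u w * A = outer u (vm w A)"
  by (cases A; cases u; cases w) (simp add: algebra_simps)
lemma outer_outer: "outer u w * outer u' w' = outer (vsc (dot w u') u) w'"
  by (cases u; cases w; cases u'; cases w') (simp add: algebra_simps)
lemma mv_dg: "mv (dg a) v = vsc a v" by (cases v) (simp add: dg_def)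
lemma vm_dg: "vm z (dg a) = vsc a z" by (cases z) (simp add: dg_def algebra_simps)
lemma dg_comm: "dg a * A = A * dg a" by (cases A) (simp add: dg_def algebra_simps)
lemma dg_one[simp]: "dg 1 = 1" by (simp add: dg_def one_m3_def)
lemma dg_mult: "dg a * dg b = dg (a*b)" by (simp add: dg_def)
lemma dg_add: "dg a + dg b = dg (a+b)" by (simp add: dg_def)

lemma mv_cols1: "mv (mcols p s t) e1 = p" by (cases p; cases s; cases t) (simp add: e1_def)
lemma mv_cols2: "mv (mcols p s t) e2 = s" by (cases p; cases s; cases t) (simp add: e2_def)
lemma mv_cols3: "mv (mcols p s t) e3 = t" by (cases p; cases s; cases t) (simp add: e3_def)
lemma vm_rows3: "vm e3 (mrows a b c) = c" by (cases a; cases b; cases c) (simp add: e3_def)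

lemma upper_iff: "upper M \<longleftrightarrow> dot e2 (mv M e1) = 0 \<and> dot e3 (mv M e1) = 0 \<and> dot e3 (mv M e2) = 0"
  by (cases M) (simp add: e1_def e2_def e3_def)

lemma basis_e: fixes p :: "'a::comm_ring_1 v3"
  assumes "p \<noteq> v0" shows "\<exists>e\<in>{e1,e2,e3}. dot p e \<noteq> 0"
  using assms by (cases p) (auto simp: e1_def e2_def e3_def v0_def)

lemma e_dots: "dot e1 e1 = 1" "dot e2 e2 = 1" "dot e3 e3 = 1" "dot e2 e1 = 0" "dot e3 e1 = 0" "dot e3 e2 = 0"
  "dot e1 e2 = 0" "dot e1 e3 = 0" "dot e2 e3 = 0"
  by (simp_all add: e1_def e2_def e3_def)

lemma adj1: "mcols p s t * mrows (cross s t) (cross t p) (cross p s) = dg (dot p (cross s t))"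
  by (cases p; cases s; cases t) (simp add: dg_def algebra_simps)
lemma adj2: "mrows (cross s t) (cross t p) (cross p s) * mcols p s t = dg (dot p (cross s t))"
  by (cases p; cases s; cases t) (simp add: dg_def algebra_simps)

lemma adj_inv: fixes p :: "'a::field v3"
  assumes "dot p (cross s t) \<noteq> 0"
  shows "mcols p s t * msc (1 / dot p (cross s t)) (mrows (cross s t) (cross t p) (cross p s)) = 1"
    "msc (1 / dot p (cross s t)) (mrows (cross s t) (cross t p) (cross p s)) * mcols p s t = 1"
proof -
  let ?D = "dot p (cross s t)"
  show "mcols p s t * msc (1 / ?D) (mrows (cross s t) (cross t p) (cross p s)) = 1"
    unfolding msc_def
    by (metis (no_types, lifting) adj1 assms dg_comm dg_mult dg_one mult.assoc divide_self_if times_divide_eq_left mult_1)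
  show "msc (1 / ?D) (mrows (cross s t) (cross t p) (cross p s)) * mcols p s t = 1"
    unfolding msc_def
    by (metis (no_types, lifting) adj2 assms dg_mult dg_one mult.assoc divide_self_if times_divide_eq_left mult_1)
qed

lemma vm_msc: "vm z (msc a M) = vsc a (vm z M)"
  by (simp add: msc_def vm_mult vm_dg[symmetric]) (cases z; cases M; simp add: dg_def algebra_simps)

lemma vsub_vsc0: "vsub x (vsc 0 y) = x" by (cases x; cases y) simp
lemma vsc0_dot: "dot x y = 0 \<Longrightarrow> vsc (dot x y) w = vsc 0 w" by simp

lemma flag_basis: fixes p z :: "'a::field v3"
  assumes "p \<noteq> v0" "z \<noteq> v0" "dot z p = 0"
  shows "\<exists>P Q. P*Q = 1 \<and> Q*P = 1 \<and> (\<forall>Y. (\<exists>\<alpha>. mv Y p = vsc \<alpha> p) \<longrightarrow> (\<exists>\<beta>. vm z Y = vsc \<beta> z) \<longrightarrow> upper (Q*Y*P))"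
proof -
  obtain ei where ei: "dot p ei \<noteq> 0" using basis_e[OF assms(1)] by blast
  obtain ek where ek: "dot z ek \<noteq> 0" using basis_e[OF assms(2)] by blast
  define s where "s = cross z ei"
  define t where "t = ek"
  have cps: "cross p s = vsc (dot p ei) z"
    unfolding s_def bac_cab using assms(3) by (simp add: dot_comm vsub_vsc0)
  define D where "D = dot p (cross s t)"
  have D: "D = dot p ei * dot z ek" unfolding D_def triple cps t_def dot_vsc1 ..
  have Dnz: "D \<noteq> 0" using D ei ek by simp
  define P where "P = mcols p s t"
  define Q where "Q = msc (1 / D) (mrows (cross s t) (cross t p) (cross p s))"
  have PQ: "P * Q = 1" "Q * P = 1" unfolding P_def Q_def D_def using adj_inv Dnz D_def by blast+
  have zs: "dot z s = 0" unfolding s_def by (simp add: cross_self)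
  have row3: "vm e3 Q = vsc (1/D * dot p ei) z"
    unfolding Q_def vm_msc vm_rows3 cps vsc_vsc ..
  have "upper (Q*Y*P)" if a: "mv Y p = vsc \<alpha> p" and b: "vm z Y = vsc \<beta> z" for Y \<alpha> \<beta>
  proof -
    have c1: "mv (Q*Y*P) e1 = vsc \<alpha> e1"
    proof -
      have "mv (Q*Y*P) e1 = mv Q (mv Y p)" by (simp add: mv_mult P_def mv_cols1)
      also have "\<dots> = vsc \<alpha> (mv (Q*P) e1)" by (simp add: a mv_vsc mv_mult P_def mv_cols1)
      finally show ?thesis using PQ by simp
    qed
    have c2: "dot e3 (mv (Q*Y*P) e2) = 0"
    proof -
      have "dot e3 (mv (Q*Y*P) e2) = dot (vm e3 Q) (mv Y s)" by (simp add: mv_mult P_def mv_cols2 dot_mv)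
      also have "\<dots> = (1/D * dot p ei) * (\<beta> * dot z s)" by (simp only: row3 dot_mv vm_vsc b dot_vsc1 vsc_vsc) (simp add: algebra_simps)
      finally show ?thesis using zs by simp
    qed
    show ?thesis unfolding upper_iff c1 using c2 by (simp add: dot_vsc2 e_dots)
  qed
  then show ?thesis using PQ by blast
qed

instantiation v3 :: (comm_ring_1) ab_group_add
begin
definition "0 = V3 0 0 0"
fun plus_v3 where "plus_v3 (V3 a b c) (V3 a' b' c') = V3 (a+a') (b+b') (c+c')"
fun minus_v3 where "minus_v3 (V3 a b c) (V3 a' b' c') = V3 (a-a') (b-b') (c-c')"
fun uminus_v3 where "uminus_v3 (V3 a b c) = V3 (-a) (-b) (-c)"
instance proof
  fix x y z :: "'a v3"
  show "x + y + z = x + (y + z)" by (cases x; cases y; cases z) (simp add: algebra_simps)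
  show "x + y = y + x" by (cases x; cases y) (simp add: algebra_simps)
  show "0 + x = x" by (cases x) (simp add: zero_v3_def)
  show "- x + x = 0" by (cases x) (simp add: zero_v3_def)
  show "x - y = x + - y" by (cases x; cases y) (simp add: algebra_simps)
qed
end

lemma v0_eq: "v0 = 0" by (simp add: v0_def zero_v3_def)
lemma mv_add: "mv (A + B) v = mv A v + mv B v" by (cases A; cases B; cases v) (simp add: algebra_simps)
lemma mv_diff: "mv (A - B) v = mv A v - mv B v" by (cases A; cases B; cases v) (simp add: algebra_simps)
lemma vm_add: "vm z (A + B) = vm z A + vm z B" by (cases A; cases B; cases z) (simp add: algebra_simps)
lemma vm_diff: "vm z (A - B) = vm z A - vm z B" by (cases A; cases B; cases z) (simp add: algebra_simps)
lemma dot_add2: "dot x (y + y') = dot x y + dot x y'" by (cases x; cases y; cases y') (simp add: algebra_simps)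
lemma dot_diff2: "dot x (y - y') = dot x y - dot x y'" by (cases x; cases y; cases y') (simp add: algebra_simps)
lemma dot_diff1: "dot (y - y') x = dot y x - dot y' x" by (cases x; cases y; cases y') (simp add: algebra_simps)
lemma vsc_zero[simp]: "vsc 0 x = 0" by (cases x) (simp add: zero_v3_def)
lemma vsc_zero2[simp]: "vsc a 0 = 0" by (simp add: zero_v3_def)
lemma dot_zero[simp]: "dot 0 x = 0" "dot x 0 = 0" by (cases x; simp add: zero_v3_def)+
lemma mv_zero[simp]: "mv A 0 = 0" by (cases A) (simp add: zero_v3_def)
lemma vm_zero[simp]: "vm 0 A = 0" by (cases A) (simp add: zero_v3_def)
lemma vsc_diff: "vsc a x - vsc b x = vsc (a - b) x" by (cases x) (simp add: algebra_simps)
lemma mv_msc: "mv (msc a A) v = vsc a (mv A v)" by (simp add: msc_def mv_mult mv_dg)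
lemma msc_mult: "msc a A * B = msc a (A * B)" by (simp add: msc_def mult.assoc)
lemma mult_msc: "A * msc a B = msc a (A * B)" by (simp add: msc_def) (metis dg_comm mult.assoc)
lemma outer_vsc1: "outer (vsc a u) w = msc a (outer u w)" by (cases u; cases w) (simp add: msc_def dg_def algebra_simps)
lemma outer_vsc2: "outer u (vsc a w) = msc a (outer u w)" by (cases u; cases w) (simp add: msc_def dg_def algebra_simps)
lemma vsc_cancel: fixes x :: "'a::field v3" shows "a \<noteq> 0 \<Longrightarrow> vsc a x = vsc b y \<Longrightarrow> x = vsc (b/a) y"
  by (cases x; cases y) (auto simp: field_simps)
lemma vsc_inj: fixes x :: "'a::field v3" shows "a \<noteq> 0 \<Longrightarrow> vsc a x = 0 \<Longrightarrow> x = 0"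
  by (cases x) (auto simp: zero_v3_def)

lemma outer_eq: fixes u :: "'a::field v3"
  assumes "u \<noteq> 0" "w \<noteq> 0" "outer x w = outer u y"
  shows "\<exists>\<alpha>. x = vsc \<alpha> u \<and> y = vsc \<alpha> w"
proof -
  obtain ek where ek: "dot w ek \<noteq> 0" using basis_e[of w] assms(2) v0_eq by auto
  obtain ei where ei: "dot ei u \<noteq> 0" using basis_e[of u] assms(1) v0_eq dot_comm by metis
  have "vsc (dot w ek) x = vsc (dot y ek) u" using arg_cong[OF assms(3), of "\<lambda>M. mv M ek"] by (simp add: mv_outer)
  then have x: "x = vsc (dot y ek / dot w ek) u" using vsc_cancel ek by blast
  have "vsc (dot ei u) y = vsc (dot ei x) w" using arg_cong[OF assms(3), of "\<lambda>M. vm ei M"] by (simp add: vm_outer)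
  then have y: "y = vsc (dot ei x / dot ei u) w" using vsc_cancel ei by blast
  have "dot ei x / dot ei u = dot y ek / dot w ek" using ei by (simp add: x dot_vsc2)
  then show ?thesis using x y by metis
qed

lemma comm_outer: fixes Y :: "'a::field m3"
  assumes "Y * (dg l + outer u w) = (dg l + outer u w) * Y"
  shows "Y * outer u w = outer u w * Y"
  using assms by (simp add: algebra_simps dg_comm)

definition flag :: "'a::field v3 \<Rightarrow> 'a v3 \<Rightarrow> 'a m3 \<Rightarrow> bool" where
  "flag p z Y \<longleftrightarrow> (\<exists>\<alpha>. mv Y p = vsc \<alpha> p) \<and> (\<exists>\<beta>. vm z Y = vsc \<beta> z)"

lemma rank1_flag: fixes X1 :: "'a::field m3"
  assumes X1: "X1 = dg l + outer u w" and uw: "u \<noteq> 0" "w \<noteq> 0"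
    and c: "X1*Y1 = Y1*X1" "X1*Y2 = Y2*X1" "X2*Y1 = Y1*X2" "X2*Y2 = Y2*X2" "X1*X2 \<noteq> X2*X1"
  shows "\<exists>p z. p \<noteq> 0 \<and> z \<noteq> 0 \<and> dot z p = 0 \<and> flag p z Y1 \<and> flag p z Y2"
proof -
  have ev: "\<exists>\<alpha>. mv Y u = vsc \<alpha> u \<and> vm w Y = vsc \<alpha> w" if "X1*Y = Y*X1" for Y
  proof -
    have "Y * outer u w = outer u w * Y" using comm_outer that X1 by metis
    then have "outer (mv Y u) w = outer u (vm w Y)" by (simp add: mult_outer outer_mult)
    then show ?thesis using outer_eq uw by blast
  qed
  obtain a1 where a1: "mv Y1 u = vsc a1 u" "vm w Y1 = vsc a1 w" using ev c(1) by metis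
  obtain a2 where a2: "mv Y2 u = vsc a2 u" "vm w Y2 = vsc a2 w" using ev c(2) by metis
  show ?thesis
  proof (cases "dot w u = 0")
    case True
    then show ?thesis using uw a1 a2 unfolding flag_def by blast
  next
    case False
    define s where "s = dot w u"
    define \<pi> where "\<pi> = 1 - msc (1/s) (outer u w)"
    have picomm: "Y * \<pi> = \<pi> * Y" if "X1*Y = Y*X1" for Y
    proof -
      have "Y * outer u w = outer u w * Y" using comm_outer that X1 by metis
      then show ?thesis unfolding \<pi>_def by (simp add: algebra_simps mult_msc msc_mult)
    qed
    have wpi: "vm w \<pi> = 0" unfolding \<pi>_def s_def using False
      by (simp add: vm_diff vm_msc vm_outer vsc_vsc)
    have piu: "mv \<pi> u = 0" unfolding \<pi>_def s_def using False
      by (simp add: mv_diff mv_msc mv_outer vsc_vsc dot_comm)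
    define q where "q = mv (\<pi> * X2) u"
    define r where "r = vm w (X2 * \<pi>)"
    have qev: "mv Y q = vsc a q" if "X1*Y = Y*X1" "X2*Y = Y*X2" "mv Y u = vsc a u" for Y a
    proof -
      have "mv Y q = mv (Y * \<pi> * X2) u" by (simp add: q_def mv_mult mult.assoc)
      also have "\<dots> = mv (\<pi> * X2 * Y) u" using picomm[OF that(1)] that(2) by (metis mult.assoc)
      also have "\<dots> = vsc a q" by (simp add: mv_mult that(3) mv_vsc q_def)
      finally show ?thesis .
    qed
    have rev: "vm r Y = vsc a r" if "X1*Y = Y*X1" "X2*Y = Y*X2" "vm w Y = vsc a w" for Y a
    proof -
      have "vm r Y = vm w (X2 * \<pi> * Y)" by (simp add: r_def vm_mult)
      also have "\<dots> = vm w (Y * X2 * \<pi>)" using picomm[OF that(1)] that(2) by (metis mult.assoc)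
      also have "\<dots> = vsc a r" by (simp add: vm_mult that(3) vm_vsc r_def)
      finally show ?thesis .
    qed
    have wq: "dot w q = 0" unfolding q_def mv_mult dot_mv wpi by simp
    have ru: "dot r u = 0" unfolding r_def vm_mult dot_mv[symmetric] piu by simp
    show ?thesis
    proof (cases "q = 0")
      case False
      then show ?thesis using wq uw qev[OF c(1) c(3) a1(1)] qev[OF c(2) c(4) a2(1)] a1 a2
        unfolding flag_def by blast
    next
      case qz: True
      show ?thesis
      proof (cases "r = 0")
        case False
        then show ?thesis using ru uw rev[OF c(1) c(3) a1(2)] rev[OF c(2) c(4) a2(2)] a1 a2
          unfolding flag_def by blast
      next
        case rz: True
        define \<kappa> where "\<kappa> = dot w (mv X2 u) / s"
        have "q = mv X2 u - vsc \<kappa> u" unfolding q_def \<pi>_def \<kappa>_def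
          by (simp add: algebra_simps mv_mult mv_diff mv_msc mv_outer vsc_vsc)
        then have X2u: "mv X2 u = vsc \<kappa> u" using qz by simp
        have "r = vm w X2 - vsc \<kappa> w" unfolding r_def \<pi>_def \<kappa>_def
          by (simp add: algebra_simps vm_mult vm_diff vm_msc vm_outer vsc_vsc dot_mv)
        then have wX2: "vm w X2 = vsc \<kappa> w" using rz by simp
        have "X2 * outer u w = outer u w * X2"
          by (simp add: mult_outer outer_mult X2u wX2 outer_vsc1 outer_vsc2)
        then have "X1 * X2 = X2 * X1" unfolding X1 by (simp add: algebra_simps dg_comm)
        then show ?thesis using c(5) by simp
      qed
    qed
  qed
qed

definition cjg :: "'a::comm_ring_1 m3 \<Rightarrow> 'a m3 \<Rightarrow> 'a m3 \<Rightarrow> 'a m3" where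
  "cjg P Q M = Q * M * P"

lemma conj_mult: "P * Q = 1 \<Longrightarrow> cjg P Q (A * B) = cjg P Q A * cjg P Q B"
  unfolding cjg_def by (metis mult.assoc mult_1_right)
lemma conj_one: "Q * P = 1 \<Longrightarrow> cjg P Q 1 = 1" unfolding cjg_def by simp
lemma conj_inj: "P * Q = 1 \<Longrightarrow> cjg P Q A = cjg P Q B \<Longrightarrow> A = B"
  unfolding cjg_def by (metis mult.assoc mult_1_left mult_1_right)
lemma conj_comm: "P * Q = 1 \<Longrightarrow> (cjg P Q A * cjg P Q B = cjg P Q B * cjg P Q A) \<longleftrightarrow> A * B = B * A"
  by (metis conj_inj conj_mult)

lemma lawm_conj: "P * Q = 1 \<Longrightarrow> lawm (cjg P Q y1) (cjg P Q y1') (cjg P Q y2) (cjg P Q y2') = cjg P Q (lawm y1 y1' y2 y2')"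
  by (simp only: lawm_def commu_def conj_mult[symmetric])

definition hypc :: "'a::comm_ring_1 m3 \<Rightarrow> 'a m3 \<Rightarrow> 'a m3 \<Rightarrow> 'a m3 \<Rightarrow> bool" where
  "hypc X1 X2 Y1 Y2 \<longleftrightarrow> X1*Y1 = Y1*X1 \<and> X1*Y2 = Y2*X1 \<and> X2*Y1 = Y1*X2 \<and> X2*Y2 = Y2*X2 \<and> X1*X2 \<noteq> X2*X1 \<and> Y1*Y2 \<noteq> Y2*Y1"

definition goalc :: "'a::comm_ring_1 m3 \<Rightarrow> 'a m3 \<Rightarrow> bool" where
  "goalc Y1 Y2 \<longleftrightarrow> (\<forall>Y1' Y2'. Y1*Y1' = 1 \<longrightarrow> Y1'*Y1 = 1 \<longrightarrow> Y2*Y2' = 1 \<longrightarrow> Y2'*Y2 = 1 \<longrightarrow> lawm Y1 Y1' Y2 Y2' = 1)"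

lemma hypc_conj: "P * Q = 1 \<Longrightarrow> hypc X1 X2 Y1 Y2 \<Longrightarrow> hypc (cjg P Q X1) (cjg P Q X2) (cjg P Q Y1) (cjg P Q Y2)"
  unfolding hypc_def by (simp add: conj_comm)

lemma goalc_conj: assumes "P * Q = 1" "Q * P = 1" "goalc (cjg P Q Y1) (cjg P Q Y2)" shows "goalc Y1 Y2"
  unfolding goalc_def
proof (intro allI impI)
  fix Y1' Y2' assume i: "Y1*Y1' = 1" "Y1'*Y1 = 1" "Y2*Y2' = 1" "Y2'*Y2 = 1"
  have "cjg P Q (lawm Y1 Y1' Y2 Y2') = cjg P Q 1"
    using assms(3) i unfolding goalc_def
    by (simp add: lawm_conj[OF assms(1), symmetric] conj_mult[OF assms(1), symmetric] conj_one[OF assms(2)])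
  then show "lawm Y1 Y1' Y2 Y2' = 1" using conj_inj[OF assms(1)] by blast
qed

lemma goalc_flag: fixes p :: "'a::field v3"
  assumes "p \<noteq> 0" "z \<noteq> 0" "dot z p = 0" "flag p z Y1" "flag p z Y2"
  shows "goalc Y1 Y2"
proof -
  obtain P Q where PQ: "P*Q = 1" "Q*P = 1" and up: "\<And>Y. flag p z Y \<Longrightarrow> upper (Q*Y*P)"
    using flag_basis[of p z] assms v0_eq unfolding flag_def by metis
  have "goalc (cjg P Q Y1) (cjg P Q Y2)" unfolding goalc_def
  proof (intro allI impI)
    fix Y1' Y2' assume "cjg P Q Y1 * Y1' = 1" "Y1' * cjg P Q Y1 = 1" "cjg P Q Y2 * Y2' = 1" "Y2' * cjg P Q Y2 = 1"
    then show "lawm (cjg P Q Y1) Y1' (cjg P Q Y2) Y2' = 1"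
      using lawm_upper up assms(4,5) unfolding cjg_def by blast
  qed
  then show ?thesis using goalc_conj PQ by blast
qed

lemma cent_diag: fixes a :: "'a::field"
  assumes "a \<noteq> d" "a \<noteq> f" "d \<noteq> f" "T = M3 a 0 0 0 d 0 0 0 f"
    "T*Y1 = Y1*T" "T*Y2 = Y2*T" shows "Y1*Y2 = Y2*Y1"
  using assms by (cases Y1; cases Y2) (auto simp: algebra_simps)

lemma cent_2: fixes a :: "'a::field"
  assumes "b \<noteq> 0" "a \<noteq> f" "T = M3 a b 0 0 a 0 0 0 f"
    "T*Y1 = Y1*T" "T*Y2 = Y2*T" shows "Y1*Y2 = Y2*Y1"
  using assms by (cases Y1; cases Y2) (auto simp: algebra_simps)

lemma cent_3: fixes a :: "'a::field"
  assumes "c \<noteq> 0" "a \<noteq> d" "T = M3 a 0 c 0 d 0 0 0 a"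
    "T*Y1 = Y1*T" "T*Y2 = Y2*T" shows "Y1*Y2 = Y2*Y1"
  using assms by (cases Y1; cases Y2) (auto simp: algebra_simps)

lemma cent_4: fixes a :: "'a::field"
  assumes "e \<noteq> 0" "a \<noteq> d" "T = M3 a 0 0 0 d e 0 0 d"
    "T*Y1 = Y1*T" "T*Y2 = Y2*T" shows "Y1*Y2 = Y2*Y1"
  using assms by (cases Y1; cases Y2) (auto simp: algebra_simps)

lemma cent_5: fixes a :: "'a::field"
  assumes "b \<noteq> 0" "e \<noteq> 0" "T = M3 a b c 0 a e 0 0 a"
    "T*Y1 = Y1*T" "T*Y2 = Y2*T" shows "Y1*Y2 = Y2*Y1"
  using assms apply (cases Y1; cases Y2)
  apply (auto simp: algebra_simps)
  apply (rule mult_left_cancel[THEN iffD1, of b], assumption)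
  apply (metis mult.commute mult.left_commute)
  done


lemma normal_rank1: fixes T :: "'a::field m3"
  assumes T: "T = M3 a b c 0 d e 0 0 f" and n: "a \<noteq> d \<longrightarrow> b = 0" "a \<noteq> f \<longrightarrow> c = 0" "d \<noteq> f \<longrightarrow> e = 0"
    and h: "hypc T X2 Y1 Y2"
  shows "\<exists>l u w. u \<noteq> 0 \<and> w \<noteq> 0 \<and> T = dg l + outer u w"
proof -
  from h have c: "T*Y1 = Y1*T" "T*Y2 = Y2*T" "T*X2 \<noteq> X2*T" "Y1*Y2 \<noteq> Y2*Y1" unfolding hypc_def by auto
  have nsc: "T \<noteq> dg l" for l using c(3) dg_comm by metis
  show ?thesis
  proof (cases "a = d")
    case ad: True
    show ?thesis
    proof (cases "a = f")
      case af: True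
      show ?thesis
      proof (cases "b = 0")
        case b: True
        show ?thesis
        proof (cases "c = 0 \<and> e = 0")
          case True then show ?thesis using nsc[of a] T ad af b by (simp add: dg_def)
        next
          case False
          then have "V3 c e 0 \<noteq> 0" by (auto simp: zero_v3_def)
          moreover have "T = dg a + outer (V3 c e 0) e3" using T ad af b by (simp add: dg_def e3_def)
          moreover have "e3 \<noteq> (0::'a v3)" by (simp add: e3_def zero_v3_def)
          ultimately show ?thesis by blast
        qed
      next
        case b: False
        show ?thesis
        proof (cases "e = 0")
          case e: True
          have "V3 0 b c \<noteq> 0" using b by (auto simp: zero_v3_def)
          moreover have "T = dg a + outer e1 (V3 0 b c)" using T ad af e by (simp add: dg_def e1_def)
          moreover have "e1 \<noteq> (0::'a v3)" by (simp add: e1_def zero_v3_def)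
          ultimately show ?thesis by blast
        next
          case False
          then show ?thesis using cent_5[OF b False _ c(1,2)] c(4) T ad af by auto
        qed
      qed
    next
      case af: False
      then have ce: "c = 0" "e = 0" using n ad by auto
      show ?thesis
      proof (cases "b = 0")
        case b: True
        have "V3 0 0 (f-a) \<noteq> 0" using af by (auto simp: zero_v3_def)
        moreover have "T = dg a + outer (V3 0 0 (f-a)) e3" using T ad ce b by (simp add: dg_def e3_def)
        moreover have "e3 \<noteq> (0::'a v3)" by (simp add: e3_def zero_v3_def)
        ultimately show ?thesis by blast
      next
        case False
        then show ?thesis using cent_2[OF False af _ c(1,2)] c(4) T ad ce by auto
      qed
    qed
  next
    case ad: False
    then have b: "b = 0" using n by auto
    show ?thesis
    proof (cases "a = f")
      case af: True
      then have e: "e = 0" using n ad by auto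
      show ?thesis
      proof (cases "c = 0")
        case c0: True
        have "V3 0 (d-a) 0 \<noteq> 0" using ad by (auto simp: zero_v3_def)
        moreover have "T = dg a + outer (V3 0 (d-a) 0) e2" using T af e b c0 by (simp add: dg_def e2_def)
        moreover have "e2 \<noteq> (0::'a v3)" by (simp add: e2_def zero_v3_def)
        ultimately show ?thesis by blast
      next
        case False
        then show ?thesis using cent_3[OF False ad _ c(1,2)] c(4) T af e b by auto
      qed
    next
      case af: False
      then have c0: "c = 0" using n by auto
      show ?thesis
      proof (cases "d = f")
        case df: True
        show ?thesis
        proof (cases "e = 0")
          case e: True
          have "V3 (a-d) 0 0 \<noteq> 0" using ad by (auto simp: zero_v3_def)
          moreover have "T = dg d + outer (V3 (a-d) 0 0) e1" using T df e b c0 by (simp add: dg_def e1_def)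
          moreover have "e1 \<noteq> (0::'a v3)" by (simp add: e1_def zero_v3_def)
          ultimately show ?thesis by blast
        next
          case False
          then show ?thesis using cent_4[OF False ad _ c(1,2)] c(4) T df b c0 by auto
        qed
      next
        case df: False
        then have "e = 0" using n by auto
        then show ?thesis using cent_diag[OF ad af df _ c(1,2)] c(4) T b c0 by auto
      qed
    qed
  qed
qed

lemma goalc_rank1: fixes X1 :: "'a::field m3"
  assumes "hypc X1 X2 Y1 Y2" "u \<noteq> 0" "w \<noteq> 0" "X1 = dg l + outer u w"
  shows "goalc Y1 Y2"
proof -
  obtain p z where "p \<noteq> 0" "z \<noteq> 0" "dot z p = 0" "flag p z Y1" "flag p z Y2"
    using rank1_flag[OF assms(4) assms(2,3)] assms(1) unfolding hypc_def by blast
  then show ?thesis using goalc_flag by blast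
qed

lemma goalc_normal: fixes T :: "'a::field m3"
  assumes "T = M3 a b c 0 d e 0 0 f" "a \<noteq> d \<longrightarrow> b = 0" "a \<noteq> f \<longrightarrow> c = 0" "d \<noteq> f \<longrightarrow> e = 0"
    and "hypc T X2 Y1 Y2"
  shows "goalc Y1 Y2"
  using normal_rank1[OF assms] goalc_rank1[OF assms(5)] by blast

lemma elim23: fixes a :: "'a::field"
  shows "\<exists>P Q c' e'. P*Q = 1 \<and> Q*P = 1 \<and> Q * M3 a b c 0 d e 0 0 f * P = M3 a b c' 0 d e' 0 0 f \<and> (d \<noteq> f \<longrightarrow> e' = 0)"
proof -
  define x where "x = (if d = f then 0 else e / (f - d))"
  show ?thesis
    apply (rule exI[of _ "M3 1 0 0 0 1 x 0 0 1"], rule exI[of _ "M3 1 0 0 0 1 (-x) 0 0 1"])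
    apply (simp add: one_m3_def x_def)
    apply (auto simp: field_simps)
    done
qed

lemma elim12: fixes a :: "'a::field"
  shows "\<exists>P Q b' c'. P*Q = 1 \<and> Q*P = 1 \<and> Q * M3 a b c 0 d e 0 0 f * P = M3 a b' c' 0 d e 0 0 f \<and> (a \<noteq> d \<longrightarrow> b' = 0)"
proof -
  define x where "x = (if a = d then 0 else b / (d - a))"
  show ?thesis
    apply (rule exI[of _ "M3 1 x 0 0 1 0 0 0 1"], rule exI[of _ "M3 1 (-x) 0 0 1 0 0 0 1"])
    apply (simp add: one_m3_def x_def)
    apply (auto simp: field_simps)
    done
qed

lemma elim13: fixes a :: "'a::field"
  shows "\<exists>P Q c'. P*Q = 1 \<and> Q*P = 1 \<and> Q * M3 a b c 0 d e 0 0 f * P = M3 a b c' 0 d e 0 0 f \<and> (a \<noteq> f \<longrightarrow> c' = 0)"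
proof -
  define x where "x = (if a = f then 0 else c / (f - a))"
  show ?thesis
    apply (rule exI[of _ "M3 1 0 x 0 1 0 0 0 1"], rule exI[of _ "M3 1 0 (-x) 0 1 0 0 0 1"])
    apply (simp add: one_m3_def x_def)
    apply (auto simp: field_simps)
    done
qed

lemma goalc_conj2: fixes P :: "'a::comm_ring_1 m3"
  assumes "P*Q = 1" "Q*P = 1" "hypc X1 X2 Y1 Y2"
    "hypc (cjg P Q X1) (cjg P Q X2) (cjg P Q Y1) (cjg P Q Y2) \<Longrightarrow> goalc (cjg P Q Y1) (cjg P Q Y2)"
  shows "goalc Y1 Y2"
  using assms goalc_conj hypc_conj by blast

lemma goalc_upper: fixes X1 :: "'a::field m3"
  assumes "hypc X1 X2 Y1 Y2" "upper X1"
  shows "goalc Y1 Y2"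
proof -
  obtain a b c d e f where X1: "X1 = M3 a b c 0 d e 0 0 f" using assms(2) by (cases X1) auto
  obtain P1 Q1 c1 e1 where 1: "P1*Q1 = 1" "Q1*P1 = 1" "cjg P1 Q1 X1 = M3 a b c1 0 d e1 0 0 f" "d \<noteq> f \<longrightarrow> e1 = 0"
    using elim23[of a b c d e f] unfolding cjg_def X1 by blast
  show ?thesis
  proof (rule goalc_conj2[OF 1(1,2) assms(1)])
    assume h1: "hypc (cjg P1 Q1 X1) (cjg P1 Q1 X2) (cjg P1 Q1 Y1) (cjg P1 Q1 Y2)"
    obtain P2 Q2 b2 c2 where 2: "P2*Q2 = 1" "Q2*P2 = 1" "cjg P2 Q2 (cjg P1 Q1 X1) = M3 a b2 c2 0 d e1 0 0 f" "a \<noteq> d \<longrightarrow> b2 = 0"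
      using elim12[of a b c1 d e1 f] unfolding cjg_def 1(3)[unfolded cjg_def] by blast
    show "goalc (cjg P1 Q1 Y1) (cjg P1 Q1 Y2)"
    proof (rule goalc_conj2[OF 2(1,2) h1])
      assume h2: "hypc (cjg P2 Q2 (cjg P1 Q1 X1)) (cjg P2 Q2 (cjg P1 Q1 X2)) (cjg P2 Q2 (cjg P1 Q1 Y1)) (cjg P2 Q2 (cjg P1 Q1 Y2))"
      obtain P3 Q3 c3 where 3: "P3*Q3 = 1" "Q3*P3 = 1" "cjg P3 Q3 (cjg P2 Q2 (cjg P1 Q1 X1)) = M3 a b2 c3 0 d e1 0 0 f" "a \<noteq> f \<longrightarrow> c3 = 0"
        using elim13[of a b2 c2 d e1 f] unfolding cjg_def 2(3)[unfolded cjg_def] by blast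
      show "goalc (cjg P2 Q2 (cjg P1 Q1 Y1)) (cjg P2 Q2 (cjg P1 Q1 Y2))"
      proof (rule goalc_conj2[OF 3(1,2) h2])
        assume h3: "hypc (cjg P3 Q3 (cjg P2 Q2 (cjg P1 Q1 X1))) (cjg P3 Q3 (cjg P2 Q2 (cjg P1 Q1 X2)))
          (cjg P3 Q3 (cjg P2 Q2 (cjg P1 Q1 Y1))) (cjg P3 Q3 (cjg P2 Q2 (cjg P1 Q1 Y2)))"
        show "goalc (cjg P3 Q3 (cjg P2 Q2 (cjg P1 Q1 Y1))) (cjg P3 Q3 (cjg P2 Q2 (cjg P1 Q1 Y2)))"
          using goalc_normal[OF 3(3) 2(4) 3(4) 1(4) h3] by simp
      qed
    qed
  qed
qed

fun det3 :: "'a::comm_ring_1 m3 \<Rightarrow> 'a" where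
  "det3 (M3 a b c d e f g h i) = a*(e*i - f*h) - b*(d*i - f*g) + c*(d*h - e*g)"

lemma mv_rows: "mv (mrows r1 r2 r3) v = V3 (dot r1 v) (dot r2 v) (dot r3 v)"
  by (cases r1; cases r2; cases r3; cases v) (simp add: algebra_simps)
lemma det3_rows: "det3 (mrows r1 r2 r3) = dot r1 (cross r2 r3)"
  by (cases r1; cases r2; cases r3) (simp add: algebra_simps)
lemma cross_anti: "cross y x = - cross x y"
  by (cases x; cases y) (simp add: algebra_simps)
lemma cross0[simp]: "cross 0 x = 0" "cross x 0 = 0" by (cases x; simp add: zero_v3_def)+
lemma cross_e: fixes r :: "'a::comm_ring_1 v3" shows "r \<noteq> 0 \<Longrightarrow> \<exists>e. cross r e \<noteq> 0"
proof (rule ccontr)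
  assume "r \<noteq> 0" "\<not> (\<exists>e. cross r e \<noteq> 0)"
  then have "cross r e1 = 0" "cross r e2 = 0" by auto
  then have "r = 0" by (cases r) (simp add: e1_def e2_def zero_v3_def)
  with \<open>r \<noteq> 0\<close> show False by simp
qed
lemma rows_ex: "\<exists>r1 r2 r3. M = mrows r1 r2 r3"
  by (cases M) (metis mrows.simps)
lemma V3_zero: "V3 0 0 0 = 0" by (simp add: zero_v3_def)

lemma kernel3: fixes M :: "'a::field m3"
  assumes "det3 M = 0" shows "\<exists>v. v \<noteq> 0 \<and> mv M v = 0"
proof -
  obtain r1 r2 r3 where M: "M = mrows r1 r2 r3" using rows_ex by blast
  have d: "dot r1 (cross r2 r3) = 0" using assms M det3_rows by metis
  have d2: "dot r3 (cross r1 r2) = 0" "dot r2 (cross r3 r1) = 0" using d triple dot_comm by metis+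
  show ?thesis
  proof (cases "cross r1 r2 \<noteq> 0")
    case True
    then show ?thesis using d2 by (intro exI[of _ "cross r1 r2"]) (simp add: M mv_rows cross_self V3_zero)
  next
    case c12: False
    show ?thesis
    proof (cases "cross r2 r3 \<noteq> 0")
      case True
      then show ?thesis using d by (intro exI[of _ "cross r2 r3"]) (simp add: M mv_rows cross_self V3_zero)
    next
      case c23: False
      show ?thesis
      proof (cases "cross r3 r1 \<noteq> 0")
        case True
        then show ?thesis using d2 by (intro exI[of _ "cross r3 r1"]) (simp add: M mv_rows cross_self V3_zero)
      next
        case c31: False
        have z: "cross r1 r2 = 0" "cross r2 r3 = 0" "cross r3 r1 = 0" "cross r2 r1 = 0" "cross r3 r2 = 0" "cross r1 r3 = 0"
          using c12 c23 c31 cross_anti[of r1 r2] cross_anti[of r2 r3] cross_anti[of r3 r1] by auto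
        show ?thesis
        proof (cases "r1 \<noteq> 0")
          case True
          then obtain e where e: "cross r1 e \<noteq> 0" using cross_e by blast
          then show ?thesis by (intro exI[of _ "cross r1 e"]) (simp add: M mv_rows cross_self triple z V3_zero)
        next
          case r1: False
          show ?thesis
          proof (cases "r2 \<noteq> 0")
            case True
            then obtain e where e: "cross r2 e \<noteq> 0" using cross_e by blast
            then show ?thesis using r1 by (intro exI[of _ "cross r2 e"]) (simp add: M mv_rows cross_self triple z V3_zero)
          next
            case r2: False
            show ?thesis
            proof (cases "r3 \<noteq> 0")
              case True
              then obtain e where e: "cross r3 e \<noteq> 0" using cross_e by blast
              then show ?thesis using r1 r2 by (intro exI[of _ "cross r3 e"]) (simp add: M mv_rows cross_self triple z V3_zero)
            next
              case False
              then show ?thesis using r1 r2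
                by (intro exI[of _ "e1"]) (simp add: M mv_rows e1_def V3_zero[symmetric])
            qed
          qed
        qed
      qed
    qed
  qed
qed

lemma eigen3: fixes Xm :: "'a::alg_closed_field m3"
  shows "\<exists>l v. v \<noteq> 0 \<and> mv Xm v = vsc l v"
proof -
  obtain a b c d e f g h i where Xm: "Xm = M3 a b c d e f g h i" by (cases Xm)
  define tr where "tr = a + e + i"
  define c2 where "c2 = (a*e - b*d) + (a*i - c*g) + (e*i - f*h)"
  define dt where "dt = det3 Xm"
  obtain x where x: "(\<Sum>k\<le>3. (\<lambda>k. if k = 3 then 1 else if k = 2 then - tr else if k = 1 then c2 else - dt) k * x ^ k) = 0"
    using alg_closed[of 3 "\<lambda>k. if k = 3 then 1 else if k = 2 then - tr else if k = 1 then c2 else - dt"] by auto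
  then have "x^3 - tr * x^2 + c2 * x - dt = 0" by (simp add: eval_nat_numeral algebra_simps)
  moreover have "det3 (Xm - dg x) = - (x^3 - tr * x^2 + c2 * x - dt)" unfolding tr_def c2_def dt_def Xm
    by (simp add: dg_def algebra_simps power3_eq_cube power2_eq_square)
  ultimately have "det3 (Xm - dg x) = 0" by simp
  then obtain v where v: "v \<noteq> 0" "mv (Xm - dg x) v = 0" using kernel3 by blast
  then have "mv Xm v = vsc x v" by (simp add: mv_diff mv_dg)
  then show ?thesis using v by blast
qed

lemma cross_ee: "cross e2 e3 = e1" "cross e3 e1 = e2" "cross e1 e2 = e3"
  by (simp_all add: e1_def e2_def e3_def)

lemma basis_first: fixes v :: "'a::field v3"
  assumes "v \<noteq> 0" shows "\<exists>P Q. P*Q = 1 \<and> Q*P = 1 \<and> mv P e1 = v"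
proof -
  obtain e where e: "e \<in> {e1,e2,e3}" "dot v e \<noteq> 0" using basis_e[of v] assms v0_eq by auto
  then obtain s t where st: "cross s t = e" using cross_ee by blast
  show ?thesis using adj_inv[of v s t] st e mv_cols1[of v s t] by blast
qed

lemma quad_root: fixes p :: "'a::alg_closed_field"
  shows "\<exists>x. x*x + p*x + q = 0"
proof -
  obtain x where "(\<Sum>k\<le>2. (\<lambda>k. if k = 2 then 1 else if k = 1 then p else q) k * x ^ k) = 0"
    using alg_closed[of 2 "\<lambda>k. if k = 2 then 1 else if k = 1 then p else q"] by auto
  then have "x*x + p*x + q = 0" by (simp add: eval_nat_numeral algebra_simps)
  then show ?thesis by blast
qed

lemma left_eigen_block: fixes l :: "'a::alg_closed_field"
  shows "\<exists>z \<mu>. z \<noteq> 0 \<and> dot z e1 = 0 \<and> vm z (M3 l a b 0 p q 0 r s) = vsc \<mu> z"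
proof -
  obtain \<mu> where mu: "\<mu>*\<mu> + (-(p+s))*\<mu> + (p*s - q*r) = 0" using quad_root by blast
  define m11 where "m11 = p - \<mu>"
  define m12 where "m12 = q"
  define m21 where "m21 = r"
  define m22 where "m22 = s - \<mu>"
  have det: "m11*m22 - m12*m21 = 0" using mu unfolding m11_def m12_def m21_def m22_def
    by (simp add: algebra_simps)
  have "\<exists>r2 r3. (r2 \<noteq> 0 \<or> r3 \<noteq> 0) \<and> r2*m11 + r3*m21 = 0 \<and> r2*m12 + r3*m22 = 0"
  proof (cases "m21 \<noteq> 0 \<or> m11 \<noteq> 0")
    case True
    then show ?thesis using det by (intro exI[of _ m21] exI[of _ "-m11"]) (auto simp: algebra_simps)
  next
    case F: False
    show ?thesis
    proof (cases "m22 \<noteq> 0 \<or> m12 \<noteq> 0")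
      case True
      then show ?thesis using det F by (intro exI[of _ m22] exI[of _ "-m12"]) (auto simp: algebra_simps)
    next
      case False
      then show ?thesis using F by (intro exI[of _ 1] exI[of _ 0]) auto
    qed
  qed
  then obtain r2 r3 where rr: "r2 \<noteq> 0 \<or> r3 \<noteq> 0" "r2*m11 + r3*m21 = 0" "r2*m12 + r3*m22 = 0" by blast
  show ?thesis
    apply (rule exI[of _ "V3 0 r2 r3"], rule exI[of _ \<mu>])
    using rr unfolding m11_def m12_def m21_def m22_def
    by (auto simp: zero_v3_def e1_def algebra_simps)
qed

theorem core: fixes X1 :: "'a::alg_closed_field m3"
  assumes h: "hypc X1 X2 Y1 Y2" shows "goalc Y1 Y2"
proof -
  obtain l v where v: "v \<noteq> 0" "mv X1 v = vsc l v" using eigen3 by blast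
  obtain P Q where PQ: "P*Q = 1" "Q*P = 1" "mv P e1 = v" using basis_first[OF v(1)] by blast
  show ?thesis
  proof (rule goalc_conj2[OF PQ(1,2) h])
    assume h1: "hypc (cjg P Q X1) (cjg P Q X2) (cjg P Q Y1) (cjg P Q Y2)"
    have "mv (cjg P Q X1) e1 = vsc l e1"
    proof -
      have "mv (cjg P Q X1) e1 = mv Q (mv X1 v)" unfolding cjg_def by (simp add: mv_mult PQ(3))
      also have "\<dots> = vsc l (mv (Q*P) e1)" by (simp add: v(2) mv_vsc mv_mult PQ(3))
      finally show ?thesis using PQ(2) by simp
    qed
    then obtain a b p q r s where Xm': "cjg P Q X1 = M3 l a b 0 p q 0 r s"
      by (cases "cjg P Q X1") (auto simp: e1_def)
    obtain z \<mu> where z: "z \<noteq> 0" "dot z e1 = 0" "vm z (cjg P Q X1) = vsc \<mu> z"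
      using left_eigen_block[of l a b p q r s] Xm' by metis
    have fl: "flag e1 z (cjg P Q X1)" unfolding flag_def using z(3) Xm' by (auto simp: e1_def)
    obtain P2 Q2 where PQ2: "P2*Q2 = 1" "Q2*P2 = 1" and up: "upper (Q2 * cjg P Q X1 * P2)"
      using flag_basis[of e1 z] z fl v0_eq unfolding flag_def by (metis e1_def v3.inject zero_neq_one V3_zero)
    show "goalc (cjg P Q Y1) (cjg P Q Y2)"
    proof (rule goalc_conj2[OF PQ2 h1])
      assume "hypc (cjg P2 Q2 (cjg P Q X1)) (cjg P2 Q2 (cjg P Q X2)) (cjg P2 Q2 (cjg P Q Y1)) (cjg P2 Q2 (cjg P Q Y2))"
      then show "goalc (cjg P2 Q2 (cjg P Q Y1)) (cjg P2 Q2 (cjg P Q Y2))"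
        using goalc_upper up unfolding cjg_def[of P2 Q2] by blast
    qed
  qed
qed

section \<open>RAAG basics\<close>

lemma raag_eq_words: "(x, y) \<in> raag_eq V E \<Longrightarrow> x \<in> words V \<and> y \<in> words V"
  by (induction rule: raag_eq.induct) (auto simp: words_def)

lemma words_append[simp]: "x @ y \<in> words V \<longleftrightarrow> x \<in> words V \<and> y \<in> words V"
  by (auto simp: words_def)

lemma raag_eq_app_right: "(x, y) \<in> raag_eq V E \<Longrightarrow> z \<in> words V \<Longrightarrow> (x @ z, y @ z) \<in> raag_eq V E"
proof (induction rule: raag_eq.induct)
  case (refl w) then show ?case by (simp add: raag_eq.refl)
next
  case (sym w w') then show ?case by (simp add: raag_eq.sym)
next
  case (trans w w' w'') then show ?case by (meson raag_eq.trans)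
next
  case (cancel xs ys v b) then show ?case using raag_eq.cancel[of xs V "ys @ z" v b E] by simp
next
  case (commute xs ys u v b c) then show ?case using raag_eq.commute[of xs V "ys @ z" u v E b c] by simp
qed

lemma raag_eq_app_left: "(x, y) \<in> raag_eq V E \<Longrightarrow> z \<in> words V \<Longrightarrow> (z @ x, z @ y) \<in> raag_eq V E"
proof (induction rule: raag_eq.induct)
  case (refl w) then show ?case by (simp add: raag_eq.refl)
next
  case (sym w w') then show ?case by (simp add: raag_eq.sym)
next
  case (trans w w' w'') then show ?case by (meson raag_eq.trans)
next
  case (cancel xs ys v b) then show ?case using raag_eq.cancel[of "z @ xs" V ys v b E] by simp
next
  case (commute xs ys u v b c) then show ?case using raag_eq.commute[of "z @ xs" V ys u v E b c] by simp
qed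

definition cls :: "'a set \<Rightarrow> ('a \<Rightarrow> 'a \<Rightarrow> bool) \<Rightarrow> 'a word \<Rightarrow> 'a word set" where
  "cls V E w = raag_eq V E `` {w}"

lemma cls_carrier: "w \<in> words V \<Longrightarrow> cls V E w \<in> carrier (RAAG V E)"
  by (auto simp: RAAG_def cls_def quotient_def)

lemma cls_self: "w \<in> words V \<Longrightarrow> w \<in> cls V E w"
  by (simp add: cls_def raag_eq.refl)

lemma cls_eq: "(w, w') \<in> raag_eq V E \<Longrightarrow> cls V E w = cls V E w'"
  unfolding cls_def by (auto intro: raag_eq.trans raag_eq.sym)

lemma cls_mult: assumes "x \<in> words V" "y \<in> words V"
  shows "cls V E x \<otimes>\<^bsub>RAAG V E\<^esub> cls V E y = cls V E (x @ y)"
proof -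
  define x' where "x' = (SOME x'. x' \<in> cls V E x)"
  define y' where "y' = (SOME y'. y' \<in> cls V E y)"
  have "x' \<in> cls V E x" unfolding x'_def by (rule someI, rule cls_self[OF assms(1)])
  then have x': "(x, x') \<in> raag_eq V E" by (simp add: cls_def)
  have "y' \<in> cls V E y" unfolding y'_def by (rule someI, rule cls_self[OF assms(2)])
  then have y': "(y, y') \<in> raag_eq V E" by (simp add: cls_def)
  have "(x @ y, x' @ y) \<in> raag_eq V E" using raag_eq_app_right[OF x' assms(2)] .
  moreover have "(x' @ y, x' @ y') \<in> raag_eq V E" using raag_eq_app_left[OF y'] raag_eq_words[OF x'] by blast
  ultimately have "(x @ y, x' @ y') \<in> raag_eq V E" by (rule raag_eq.trans)
  then have "cls V E (x' @ y') = cls V E (x @ y)" using cls_eq by metis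
  then show ?thesis by (simp add: RAAG_def x'_def y'_def cls_def)
qed


section \<open>Evaluation into a concrete group\<close>

definition "Amat = (M3 1 2 0 0 1 0 0 0 1 :: int m3)"
definition "Ainv = (M3 1 (-2) 0 0 1 0 0 0 1 :: int m3)"
definition "Cmat = (M3 1 0 0 2 1 0 0 0 1 :: int m3)"
definition "Cinv = (M3 1 0 0 (-2) 1 0 0 0 1 :: int m3)"

fun lett :: "'a \<Rightarrow> 'a \<Rightarrow> ('a \<times> bool) \<Rightarrow> int m3" where
  "lett x y (v, b) = (if v = x then (if b then Amat else Ainv) else if v = y then (if b then Cmat else Cinv) else 1)"

definition ev :: "'a \<Rightarrow> 'a \<Rightarrow> 'a word \<Rightarrow> int m3" where
  "ev x y w = foldr (\<lambda>l acc. lett x y l * acc) w 1"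

lemma ev_Nil[simp]: "ev x y [] = 1" by (simp add: ev_def)
lemma ev_Cons[simp]: "ev x y (l # w) = lett x y l * ev x y w" by (simp add: ev_def)
lemma ev_append: "ev x y (w1 @ w2) = ev x y w1 * ev x y w2"
  by (induction w1) (simp_all add: mult.assoc)

lemma AC_inv: "Amat * Ainv = 1" "Ainv * Amat = 1" "Cmat * Cinv = 1" "Cinv * Cmat = 1"
  by (simp_all add: Amat_def Ainv_def Cmat_def Cinv_def one_m3_def)

lemma lett_cancel: "lett x y (v, b) * lett x y (v, \<not> b) = 1"
  by (cases b) (simp_all add: AC_inv)

lemma ev_invariant:
  assumes "(w, w') \<in> raag_eq V E" "\<not> E x y" "\<not> E y x" "\<forall>u\<in>V. \<not> E u u"
  shows "ev x y w = ev x y w'"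
  using assms(1)
proof (induction rule: raag_eq.induct)
  case (cancel xs ys v b)
  have "ev x y (xs @ [(v, b), (v, \<not> b)] @ ys) = ev x y xs * (lett x y (v, b) * lett x y (v, \<not> b)) * ev x y ys"
    by (simp add: ev_append mult.assoc del: lett.simps)
  then show ?case unfolding lett_cancel by (simp add: ev_append del: lett.simps)
next
  case (commute xs ys u v b c)
  have "lett x y (u, b) * lett x y (v, c) = lett x y (v, c) * lett x y (u, b)"
  proof -
    have uv: "u \<noteq> v" using commute assms(4) by auto
    have "lett x y (u, b) = 1 \<or> lett x y (v, c) = 1"
    proof (cases "u = x \<or> u = y")
      case True
      then have "v \<noteq> x \<and> v \<noteq> y" using uv commute(5) assms(2,3) by auto
      then show ?thesis by simp
    next
      case False
      then show ?thesis by simp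
    qed
    then show ?thesis by (elim disjE) (simp_all del: lett.simps)
  qed
  then have "lett x y (u, b) * (lett x y (v, c) * ev x y ys) = lett x y (v, c) * (lett x y (u, b) * ev x y ys)"
    by (simp only: mult.assoc[symmetric])
  then show ?case by (simp add: ev_append del: lett.simps)
qed auto

definition commw :: "'a list \<Rightarrow> 'a list \<Rightarrow> 'a list \<Rightarrow> 'a list \<Rightarrow> 'a list" where
  "commw x y x' y' = x @ y @ x' @ y'"

definition laww :: "'a list \<Rightarrow> 'a list \<Rightarrow> 'a list \<Rightarrow> 'a list \<Rightarrow> 'a list" where
  "laww y1 y1' y2 y2' = commw (commw (commw y1 y2 y1' y2') (commw y1' y2 y1 y2') (commw y2 y1 y2' y1') (commw y2 y1' y2' y1))
     (commw y1 y2' y1' y2)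
     (commw (commw y1' y2 y1 y2') (commw y1 y2 y1' y2') (commw y2 y1' y2' y1) (commw y2 y1 y2' y1'))
     (commw y2' y1 y2 y1')"

lemma laww_hom: fixes F :: "'a list \<Rightarrow> 'b::ring_1"
  assumes "\<And>x y. F (x @ y) = F x * F y"
  shows "F (laww a b c d) = lawm (F a) (F b) (F c) (F d)"
  unfolding laww_def lawm_def commw_def commu_def by (simp add: assms mult.assoc)

lemma laww_words: "a \<in> words V \<Longrightarrow> b \<in> words V \<Longrightarrow> c \<in> words V \<Longrightarrow> d \<in> words V \<Longrightarrow> laww a b c d \<in> words V"
  unfolding laww_def commw_def by simp

lemma lawm_AC: "lawm Amat Ainv Cmat Cinv \<noteq> 1"
proof -
  have c1: "commu Amat Cmat Ainv Cinv = M3 (21) (-8) 0 (8) (-3) 0 0 0 1"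
    by (simp add: commu_def Amat_def Cmat_def Ainv_def Cinv_def)
  have c1i: "commu Cmat Amat Cinv Ainv = M3 (-3) (8) 0 (-8) (21) 0 0 0 1"
    by (simp add: commu_def Amat_def Cmat_def Ainv_def Cinv_def)
  have c2: "commu Ainv Cmat Amat Cinv = M3 (13) (-8) 0 (-8) (5) 0 0 0 1"
    by (simp add: commu_def Amat_def Cmat_def Ainv_def Cinv_def)
  have c2i: "commu Cmat Ainv Cinv Amat = M3 (5) (8) 0 (8) (13) 0 0 0 1"
    by (simp add: commu_def Amat_def Cmat_def Ainv_def Cinv_def)
  have c3: "commu Amat Cinv Ainv Cmat = M3 (13) (8) 0 (8) (5) 0 0 0 1"
    by (simp add: commu_def Amat_def Cmat_def Ainv_def Cinv_def)
  have c3i: "commu Cinv Amat Cmat Ainv = M3 (5) (-8) 0 (-8) (13) 0 0 0 1"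
    by (simp add: commu_def Amat_def Cmat_def Ainv_def Cinv_def)
  have k: "commu (M3 (21) (-8) 0 (8) (-3) 0 0 0 1) (M3 (13) (-8) 0 (-8) (5) 0 0 0 1)
     (M3 (-3) (8) 0 (-8) (21) 0 0 0 1) (M3 (5) (8) 0 (8) (13) 0 0 0 1) = M3 (-10111) (-16512) 0 (-3840) (-6271) 0 0 0 (1::int)"
    by (simp add: commu_def)
  have ki: "commu (M3 (13) (-8) 0 (-8) (5) 0 0 0 1) (M3 (21) (-8) 0 (8) (-3) 0 0 0 1)
     (M3 (5) (8) 0 (8) (13) 0 0 0 1) (M3 (-3) (8) 0 (-8) (21) 0 0 0 1) = M3 (-6271) (16512) 0 (3840) (-10111) 0 0 0 (1::int)"
    by (simp add: commu_def)
  have l: "commu (M3 (-10111) (-16512) 0 (-3840) (-6271) 0 0 0 1) (M3 (13) (8) 0 (8) (5) 0 0 0 1)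
     (M3 (-6271) (16512) 0 (3840) (-10111) 0 0 0 1) (M3 (5) (-8) 0 (-8) (13) 0 0 0 1) =
     M3 (26716529665) (-43286234112) 0 (10146521088) (-16439436287) 0 0 0 (1::int)"
    by (simp add: commu_def)
  show ?thesis unfolding lawm_def c1 c1i c2 c2i c3 c3i k ki l by (simp add: one_m3_def)
qed

lemma ev_law: assumes "x \<noteq> y"
  shows "ev x y (laww [(x, True)] [(x, False)] [(y, True)] [(y, False)]) \<noteq> 1"
proof -
  have h: "ev x y (a @ b) = ev x y a * ev x y b" for a b by (rule ev_append)
  have "ev x y (laww [(x, True)] [(x, False)] [(y, True)] [(y, False)]) =
     lawm (ev x y [(x, True)]) (ev x y [(x, False)]) (ev x y [(y, True)]) (ev x y [(y, False)])"
    by (rule laww_hom[of "ev x y", OF h])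
  also have "\<dots> = lawm Amat Ainv Cmat Cinv" using assms by simp
  finally show ?thesis using lawm_AC by simp
qed

lemma ev_comm: assumes "x \<noteq> y"
  shows "ev x y [(x, True), (y, True)] \<noteq> ev x y [(y, True), (x, True)]"
  using assms by (simp add: Amat_def Cmat_def one_m3_def)


lemma laww_hom_words: fixes F :: "'a word \<Rightarrow> 'b::ring_1"
  assumes "\<And>x y. x \<in> words V \<Longrightarrow> y \<in> words V \<Longrightarrow> F (x @ y) = F x * F y"
    and "a \<in> words V" "b \<in> words V" "c \<in> words V" "d \<in> words V"
  shows "F (laww a b c d) = lawm (F a) (F b) (F c) (F d)"
  unfolding laww_def lawm_def commw_def commu_def using assms(2-5) by (simp add: assms(1) mult.assoc)

section \<open>From matrices to 3x3 matrices over the algebraic closure\<close>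

definition ent :: "nat \<Rightarrow> 'f::field mat \<Rightarrow> nat \<Rightarrow> nat \<Rightarrow> 'f alg_closure" where
  "ent d M i j = (if i < d \<and> j < d then to_ac (M $$ (i, j)) else if i = j then 1 else 0)"

definition fm :: "(nat \<Rightarrow> nat \<Rightarrow> 'b::comm_ring_1) \<Rightarrow> 'b m3" where
  "fm f = M3 (f 0 0) (f 0 1) (f 0 2) (f 1 0) (f 1 1) (f 1 2) (f 2 0) (f 2 1) (f 2 2)"

definition phi :: "nat \<Rightarrow> 'f::field mat \<Rightarrow> 'f alg_closure m3" where
  "phi d M = fm (ent d M)"

lemma sum3: "(\<Sum>k<(3::nat). g k) = g 0 + g 1 + (g 2 :: 'b::comm_ring_1)"
  by (simp add: eval_nat_numeral lessThan_Suc add.commute add.left_commute)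

lemma fm_mult: "fm f * fm g = fm (\<lambda>i j. \<Sum>k<3. f i k * g k j)"
  by (simp add: fm_def sum3)

lemma less3: "(i::nat) < 3 \<longleftrightarrow> i = 0 \<or> i = 1 \<or> i = 2" by auto

lemma fm_cong: "(\<And>i j. i < 3 \<Longrightarrow> j < 3 \<Longrightarrow> f i j = g i j) \<Longrightarrow> fm f = fm g"
  by (simp add: fm_def)

lemma fm_inj: "fm f = fm g \<Longrightarrow> i < 3 \<Longrightarrow> j < 3 \<Longrightarrow> f i j = g i j"
  unfolding less3 by (auto simp: fm_def)

lemma mult_entry: assumes "M \<in> carrier_mat d d" "N \<in> carrier_mat d d" "i < d" "j < d"
  shows "(M * N) $$ (i, j) = (\<Sum>k\<in>{0..<d}. M $$ (i, k) * N $$ (k, j))"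
  using assms by (simp add: scalar_prod_def)

lemma ent_mult: fixes M :: "'f::field mat"
  assumes M: "M \<in> carrier_mat d d" and N: "N \<in> carrier_mat d d" and d: "d \<le> 3" and ij: "i < 3" "j < 3"
  shows "ent d (M * N) i j = (\<Sum>k<3. ent d M i k * ent d N k j)"
proof (cases "i < d \<and> j < d")
  case True
  have "ent d (M * N) i j = (\<Sum>k\<in>{0..<d}. to_ac (M $$ (i, k)) * to_ac (N $$ (k, j)))"
    using True mult_entry[OF M N] by (simp add: ent_def to_ac_sum)
  also have "\<dots> = (\<Sum>k\<in>{0..<d}. ent d M i k * ent d N k j)"
    using True by (intro sum.cong) (auto simp: ent_def)
  also have "\<dots> = (\<Sum>k<3. ent d M i k * ent d N k j)"
    using True d by (intro sum.mono_neutral_left) (auto simp: ent_def)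
  finally show ?thesis .
next
  case False
  show ?thesis
  proof (cases "i < d")
    case True
    with False have j: "\<not> j < d" by auto
    have "(\<Sum>k<3. ent d M i k * ent d N k j) = (\<Sum>k<3. if k = j then ent d M i k else 0)"
      using j by (intro sum.cong) (auto simp: ent_def)
    also have "\<dots> = ent d M i j" using ij by simp
    finally show ?thesis using True j by (simp add: ent_def)
  next
    case i: False
    have "(\<Sum>k<3. ent d M i k * ent d N k j) = (\<Sum>k<3. if i = k then ent d N k j else 0)"
      using i by (intro sum.cong) (auto simp: ent_def)
    also have "\<dots> = ent d N i j" using ij by simp
    finally show ?thesis using i by (simp add: ent_def)
  qed
qed

lemma phi_mult: fixes M :: "'f::field mat"
  assumes "M \<in> carrier_mat d d" "N \<in> carrier_mat d d" "d \<le> 3"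
  shows "phi d (M * N) = phi d M * phi d N"
  unfolding phi_def fm_mult by (rule fm_cong) (rule ent_mult[OF assms])

lemma phi_one: "d \<le> 3 \<Longrightarrow> phi d (1\<^sub>m d :: 'f::field mat) = 1"
  by (auto simp: phi_def fm_def ent_def one_m3_def)

lemma phi_inj: fixes M :: "'f::field mat"
  assumes "M \<in> carrier_mat d d" "N \<in> carrier_mat d d" "d \<le> 3" "phi d M = phi d N"
  shows "M = N"
proof (rule eq_matI)
  fix i j assume "i < dim_row N" "j < dim_col N"
  then have ij: "i < d" "j < d" using assms by auto
  have "ent d M i j = ent d N i j" using fm_inj[OF assms(4)[unfolded phi_def]] ij assms(3) by auto
  then show "M $$ (i, j) = N $$ (i, j)" using ij by (simp add: ent_def)
qed (use assms in auto)


lemma GL_carrier: "carrier (GL d TYPE('f::field)) = Units (ring_mat TYPE('f) d ())"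
  by (simp add: GL_def units_of_def)
lemma GL_mult: "mult (GL d TYPE('f::field)) = (*)"
  by (simp add: GL_def units_of_def ring_mat_simps)

lemma unit_idem: fixes A :: "'f::field mat"
  assumes "A \<in> Units (ring_mat TYPE('f) d ())" "A * A = A"
  shows "A = 1\<^sub>m d"
proof -
  obtain N where N: "N \<in> carrier_mat d d" "N * A = 1\<^sub>m d" and A: "A \<in> carrier_mat d d"
    using assms(1) unfolding Units_def by (auto simp: ring_mat_simps)
  have "A = 1\<^sub>m d * A" using A by (simp add: left_mult_one_mat)
  also have "\<dots> = (N * A) * A" using N by simp
  also have "\<dots> = N * (A * A)" by (rule assoc_mult_mat[OF N(1) A A])
  also have "\<dots> = 1\<^sub>m d" using assms(2) N by simp
  finally show ?thesis .
qed

theorem theorem3p2: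
  fixes V :: "'a set" and E :: "'a \<Rightarrow> 'a \<Rightarrow> bool"
    and d :: nat and h :: "'a word set \<Rightarrow> 'f::field mat"
  assumes "simple_graph V E"
    and "d \<le> 3"
    and "h \<in> hom (RAAG V E) (GL d TYPE('f))"
    and "inj_on h (carrier (RAAG V E))"
  shows "\<not> has_induced_square V E"
proof
  assume "has_induced_square V E"
  then obtain a b c e where V: "a \<in> V" "b \<in> V" "c \<in> V" "e \<in> V" and dist: "distinct [a, b, c, e]"
    and edges: "E a b" "E b c" "E c e" "E e a" and nonedges: "\<not> E a c" "\<not> E b e"
    unfolding has_induced_square_def by blast
  have symE: "\<And>u v. u \<in> V \<Longrightarrow> v \<in> V \<Longrightarrow> E u v \<Longrightarrow> E v u"
    and irr: "\<forall>u\<in>V. \<not> E u u" using assms(1) unfolding simple_graph_def by blast+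
  have ne: "\<not> E c a" "\<not> E e b" using symE nonedges V by blast+
  have edges2: "E a e" "E c b" using symE edges V by blast+
  define H where "H w = h (cls V E w)" for w
  have HU: "H w \<in> Units (ring_mat TYPE('f) d ())" if "w \<in> words V" for w
    using assms(3) cls_carrier[OF that, of E] unfolding H_def hom_def GL_carrier by auto
  have Hc: "H w \<in> carrier_mat d d" if "w \<in> words V" for w
    using HU[OF that] unfolding Units_def by (simp add: ring_mat_simps)
  have Hm: "H (x @ y) = H x * H y" if "x \<in> words V" "y \<in> words V" for x y
  proof -
    have "H (x @ y) = h (cls V E x \<otimes>\<^bsub>RAAG V E\<^esub> cls V E y)" unfolding H_def using cls_mult[OF that] by simp
    also have "\<dots> = H x * H y" using assms(3) cls_carrier that unfolding hom_def H_def GL_mult by blast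
    finally show ?thesis .
  qed
  have e0: "[] \<in> words V" by (simp add: words_def)
  have H1: "H [] = 1\<^sub>m d"
    using unit_idem[OF HU[OF e0]] Hm[OF e0 e0] by simp
  define Phi where "Phi w = phi d (H w)" for w
  have Pm: "Phi (x @ y) = Phi x * Phi y" if "x \<in> words V" "y \<in> words V" for x y
    unfolding Phi_def Hm[OF that] using phi_mult[OF Hc[OF that(1)] Hc[OF that(2)] assms(2)] .
  have P1: "Phi [] = 1" unfolding Phi_def H1 using phi_one[OF assms(2)] .
  have Pinj: "(x, y) \<in> raag_eq V E" if "x \<in> words V" "y \<in> words V" "Phi x = Phi y" for x y
  proof -
    have "H x = H y" using phi_inj[OF Hc[OF that(1)] Hc[OF that(2)] assms(2)] that(3) unfolding Phi_def by blast
    then have "cls V E x = cls V E y" using assms(4) cls_carrier that unfolding H_def inj_on_def by blast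
    then have "x \<in> cls V E y" using cls_self[OF that(1), of E] by simp
    then show ?thesis unfolding cls_def by (simp add: raag_eq.sym)
  qed
  have Peq: "Phi x = Phi y" if "(x, y) \<in> raag_eq V E" for x y
    using cls_eq[OF that] unfolding Phi_def H_def by simp
  have W: "[(v, t)] \<in> words V" if "v \<in> V" for v t using that by (simp add: words_def)
  have comm_letters: "Phi [(u, True)] * Phi [(v, True)] = Phi [(v, True)] * Phi [(u, True)]"
    if "u \<in> V" "v \<in> V" "E u v" for u v
  proof -
    have "([] @ [(u, True), (v, True)] @ [], [] @ [(v, True), (u, True)] @ []) \<in> raag_eq V E"
      by (rule raag_eq.commute) (use that in \<open>auto simp: words_def\<close>)
    then have "Phi [(u, True), (v, True)] = Phi [(v, True), (u, True)]" using Peq by simp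
    then show ?thesis using Pm[OF W[OF that(1)] W[OF that(2)]] Pm[OF W[OF that(2)] W[OF that(1)]] by simp
  qed
  have noncomm: "Phi [(u, True)] * Phi [(v, True)] \<noteq> Phi [(v, True)] * Phi [(u, True)]"
    if "u \<in> V" "v \<in> V" "\<not> E u v" "\<not> E v u" "u \<noteq> v" for u v
  proof
    assume "Phi [(u, True)] * Phi [(v, True)] = Phi [(v, True)] * Phi [(u, True)]"
    then have "Phi [(u, True), (v, True)] = Phi [(v, True), (u, True)]"
      using Pm[OF W[OF that(1)] W[OF that(2)]] Pm[OF W[OF that(2)] W[OF that(1)]] by simp
    then have "([(u, True), (v, True)], [(v, True), (u, True)]) \<in> raag_eq V E"
      by (intro Pinj) (use that in \<open>auto simp: words_def\<close>)
    then have "ev u v [(u, True), (v, True)] = ev u v [(v, True), (u, True)]"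
      by (rule ev_invariant[where V=V and E=E and x=u and y=v, OF _ that(3) that(4) irr])
    then show False using ev_comm[OF that(5)] by simp
  qed
  have invs: "Phi [(v, True)] * Phi [(v, False)] = 1" "Phi [(v, False)] * Phi [(v, True)] = 1" if "v \<in> V" for v
  proof -
    have "([] @ [(v, True), (v, \<not> True)] @ [], [] @ []) \<in> raag_eq V E"
      by (rule raag_eq.cancel) (use that in \<open>auto simp: words_def\<close>)
    then have "Phi [(v, True), (v, False)] = Phi []" using Peq by simp
    then show "Phi [(v, True)] * Phi [(v, False)] = 1" using Pm[OF W[OF that] W[OF that]] P1 by simp
    have "([] @ [(v, False), (v, \<not> False)] @ [], [] @ []) \<in> raag_eq V E"
      by (rule raag_eq.cancel) (use that in \<open>auto simp: words_def\<close>)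
    then have "Phi [(v, False), (v, True)] = Phi []" using Peq by simp
    then show "Phi [(v, False)] * Phi [(v, True)] = 1" using Pm[OF W[OF that] W[OF that]] P1 by simp
  qed
  have h: "hypc (Phi [(a, True)]) (Phi [(c, True)]) (Phi [(b, True)]) (Phi [(e, True)])"
  proof -
    have ac: "a \<noteq> c" and be: "b \<noteq> e" using dist by auto
    show ?thesis unfolding hypc_def
      using comm_letters[OF V(1) V(2) edges(1)] comm_letters[OF V(1) V(4) edges2(1)]
        comm_letters[OF V(3) V(2) edges2(2)] comm_letters[OF V(3) V(4) edges(3)]
        noncomm[OF V(1) V(3) nonedges(1) ne(1) ac] noncomm[OF V(2) V(4) nonedges(2) ne(2) be]
      by (intro conjI) assumption+
  qed
  have "lawm (Phi [(b, True)]) (Phi [(b, False)]) (Phi [(e, True)]) (Phi [(e, False)]) = 1"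
    using core[OF h] invs[OF V(2)] invs[OF V(4)] unfolding goalc_def by blast
  then have "Phi (laww [(b, True)] [(b, False)] [(e, True)] [(e, False)]) = Phi []"
    using laww_hom_words[of V Phi, OF Pm W[OF V(2)] W[OF V(2)] W[OF V(4)] W[OF V(4)]] P1 by simp
  then have "(laww [(b, True)] [(b, False)] [(e, True)] [(e, False)], []) \<in> raag_eq V E"
    by (intro Pinj laww_words W V) (auto simp: words_def)
  then have "ev b e (laww [(b, True)] [(b, False)] [(e, True)] [(e, False)]) = ev b e []"
    by (rule ev_invariant[where V=V and E=E and x=b and y=e, OF _ nonedges(2) ne(2) irr])
  then show False using ev_law[of b e] dist by simp
qed

end
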